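(* Let $m\ge 1$ and let $f_i(z)=a_iz+b_i$, $i=1,\dots,m$, with $a_i,b_i\in\mathbb{C}$ and $0<|a_i|<1$, and let $K\subset\mathbb{C}$ be the attractor of the iterated function system $\{f_1,\dots,f_m\}$. Suppose $K$ is not a singleton. If an eventually periodic word $i_1i_2\cdots i_l(j_1\cdots j_k)^\infty\in\{1,\dots,m\}^{\mathbb{N}}$ is a coding of an extreme point of the convex hull $\mathrm{co}(K)$, then $a_{j_1}a_{j_2}\cdots a_{j_k}$ is a positive real number.
   Context: The attractor $K$ is the unique nonempty compact set with $K=\bigcup_{i=1}^m f_i(K)$. For a word $i_1i_2\cdots$ write $f_{i_1\cdots i_n}=f_{i_1}\circ\cdots\circ f_{i_n}$. If $\bigcap_{n\ge1} f_{i_1\cdots i_n}(K)=\{z\}$, the infinite word $i_1i_2\cdots$ is called a coding of the point $z\in K$. The notation $(j_1\cdots j_k)^\infty$ denotes infinite repetition of the block $j_1\cdots j_k$. *)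

theory Defs
  imports "HOL-Analysis.Analysis"
begin

definition aff :: "(nat \<Rightarrow> complex) \<Rightarrow> (nat \<Rightarrow> complex) \<Rightarrow> nat \<Rightarrow> complex \<Rightarrow> complex" where
  "aff a b i = (\<lambda>z. a i * z + b i)"

definition is_attractor :: "nat \<Rightarrow> (nat \<Rightarrow> complex) \<Rightarrow> (nat \<Rightarrow> complex) \<Rightarrow> complex set \<Rightarrow> bool" where
  "is_attractor m a b K \<longleftrightarrow> K \<noteq> {} \<and> compact K \<and> K = (\<Union>i\<in>{1..m}. aff a b i ` K)"

text \<open>word_comp a b w n = f_{w 0} o f_{w 1} o ... o f_{w (n-1)} (the word is indexed from 0).\<close>
fun word_comp :: "(nat \<Rightarrow> complex) \<Rightarrow> (nat \<Rightarrow> complex) \<Rightarrow> (nat \<Rightarrow> nat) \<Rightarrow> nat \<Rightarrow> complex \<Rightarrow> complex" where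
  "word_comp a b w 0 = id"
| "word_comp a b w (Suc n) = word_comp a b w n \<circ> aff a b (w n)"

definition is_coding :: "(nat \<Rightarrow> complex) \<Rightarrow> (nat \<Rightarrow> complex) \<Rightarrow> complex set \<Rightarrow> (nat \<Rightarrow> nat) \<Rightarrow> complex \<Rightarrow> bool" where
  "is_coding a b K w z \<longleftrightarrow> (\<Inter>n\<in>{1..}. word_comp a b w n ` K) = {z}"

end

theory Submission
  imports Defs
begin

lemma cos_nonpos_mid:
  assumes "pi/2 \<le> t" "t \<le> 3*pi/2" shows "cos t \<le> 0"
proof -
  have "cos t = - sin (t - pi/2)" by (simp add: sin_diff)
  moreover have "0 \<le> sin (t - pi/2)" using assms by (intro sin_ge_zero) auto
  ultimately show ?thesis by simp
qed

lemma exists_power_Re_nonpos: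
  fixes A :: complex
  assumes "A \<noteq> 0" "\<not> (\<exists>r::real. r > 0 \<and> A = complex_of_real r)"
  shows "\<exists>n\<ge>1. Re (A ^ n) \<le> 0"
proof -
  define th where "th = Arg A"
  have Aeq: "A = rcis (cmod A) th" using rcis_cmod_Arg th_def by simp
  have thb: "- pi < th" "th \<le> pi" using Arg_bounded th_def by auto
  have th0: "th \<noteq> 0"
  proof
    assume "th = 0"
    then have "A = complex_of_real (cmod A)" using Aeq by (simp add: rcis_def)
    then show False using assms by auto
  qed
  define ph where "ph = \<bar>th\<bar>"
  have ph: "0 < ph" "ph \<le> pi" using thb th0 ph_def by auto
  define n where "n = nat \<lceil>pi / (2*ph)\<rceil>"
  have pos: "0 < pi / (2*ph)" using ph by simp
  have n1: "n \<ge> 1" using pos n_def by linarith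
  have "real n \<ge> pi/(2*ph)" using n_def by linarith
  then have l: "real n * ph \<ge> pi/2" using ph by (simp add: field_simps)
  have "real n < pi/(2*ph) + 1" using n_def pos by linarith
  then have "real n * ph < (pi/(2*ph) + 1) * ph" using ph by (intro mult_strict_right_mono) auto
  also have "(pi/(2*ph) + 1) * ph = pi/2 + ph" using ph by (simp add: field_simps)
  finally have u: "real n * ph < pi/2 + ph" .
  have "cos (real n * th) = cos (real n * ph)"
  proof (cases "th \<ge> 0")
    case True then show ?thesis using ph_def by simp
  next
    case False
    then have "real n * th = - (real n * ph)" using ph_def by simp
    then show ?thesis by (simp only: cos_minus)
  qed
  also have "\<dots> \<le> 0" proof (rule cos_nonpos_mid)
    show "pi/2 \<le> real n * ph" using l .
    show "real n * ph \<le> 3*pi/2" using u ph by linarith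
  qed
  finally have c: "cos (real n * th) \<le> 0" .
  have "A ^ n = rcis (cmod A ^ n) (real n * th)" using Aeq DeMoivre2 by metis
  then have "Re (A ^ n) = cmod A ^ n * cos (real n * th)" by simp
  also have "\<dots> \<le> 0" using c by (simp add: mult_nonneg_nonpos)
  finally show ?thesis using n1 by blast
qed

lemma quad_zero: fixes B :: complex
  shows "complex_of_real ((cmod B)^2) + complex_of_real (- 2 * Re B) * B + B^2 = 0"
proof -
  have "(cmod B)^2 = (Re B)^2 + (Im B)^2" by (rule cmod_power2)
  then show ?thesis by (simp add: complex_eq_iff power2_eq_square algebra_simps)
qed

lemma geom:
  fixes C :: "complex set" and p x A :: complex
  assumes cv: "convex (C - {p})" and x: "x \<in> C" "x \<noteq> p"
    and inv: "\<forall>y\<in>C. p + A*(y-p) \<in> C" and A0: "A \<noteq> 0"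
  shows "\<exists>r::real. r > 0 \<and> A = complex_of_real r"
proof (rule ccontr)
  assume na: "\<not> ?thesis"
  obtain n where n: "n \<ge> 1" "Re (A ^ n) \<le> 0" using exists_power_Re_nonpos[OF A0 na] by blast
  define B where "B = A ^ n"
  have B0: "B \<noteq> 0" using A0 B_def by simp
  have invn: "\<forall>y\<in>C. p + A^j*(y-p) \<in> C" for j
  proof (induction j)
    case 0 then show ?case by simp
  next
    case (Suc j)
    show ?case
    proof
      fix y assume y: "y \<in> C"
      have "p + A*((p + A^j*(y-p)) - p) \<in> C" using inv Suc y by blast
      then show "p + A^Suc j*(y-p) \<in> C" by (simp add: algebra_simps)
    qed
  qed
  define v where "v = x - p"
  have v0: "v \<noteq> 0" using x v_def by simp
  define y2 where "y2 = p + B * v"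
  define y3 where "y3 = p + B * (y2 - p)"
  have y2C: "y2 \<in> C" using invn x B_def y2_def v_def by blast
  have y3C: "y3 \<in> C" using invn y2C B_def y3_def by blast
  have y2p: "y2 \<noteq> p" using B0 v0 y2_def by simp
  have y3p: "y3 \<noteq> p" using B0 v0 y2_def y3_def by simp
  define c1 where "c1 = (cmod B)^2"
  define c2 where "c2 = - 2 * Re B"
  have c1p: "c1 > 0" using B0 c1_def by simp
  have c2p: "c2 \<ge> 0" using n B_def c2_def by simp
  define S where "S = c1 + c2 + 1"
  have Sp: "S > 0" using c1p c2p S_def by simp
  define wp where "wp = (c1/(c1+c2)) *\<^sub>R x + (c2/(c1+c2)) *\<^sub>R y2"
  have wC: "wp \<in> C - {p}"
    unfolding wp_def
    apply (rule convexD[OF cv])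
    using x y2C y2p c1p c2p by (auto simp: add_divide_distrib[symmetric])
  define q where "q = ((c1+c2)/S) *\<^sub>R wp + (1/S) *\<^sub>R y3"
  have qC: "q \<in> C - {p}"
    unfolding q_def
    apply (rule convexD[OF cv])
    using wC y3C y3p c1p c2p Sp by (auto simp: S_def add_divide_distrib[symmetric])
  have e1: "((c1+c2)/S) * (c1/(c1+c2)) = c1/S" using c1p c2p by simp
  have e2: "((c1+c2)/S) * (c2/(c1+c2)) = c2/S" using c1p c2p by simp
  have "q = (c1/S) *\<^sub>R x + (c2/S) *\<^sub>R y2 + (1/S) *\<^sub>R y3"
    unfolding q_def wp_def using c1p c2p by (simp add: scaleR_add_right e1 e2)
  also have "\<dots> = (complex_of_real c1 * x + complex_of_real c2 * y2 + y3) / complex_of_real S"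
    unfolding scaleR_conv_of_real by (simp add: add_divide_distrib)
  also have "complex_of_real c1 * x + complex_of_real c2 * y2 + y3
      = complex_of_real S * p + (complex_of_real c1 + complex_of_real c2 * B + B^2) * v"
    unfolding y3_def y2_def S_def v_def by (simp add: algebra_simps power2_eq_square)
  also have "complex_of_real c1 + complex_of_real c2 * B + B^2 = 0"
    using quad_zero[of B] c1_def c2_def by simp
  finally have "q = p" using Sp by simp
  then show False using qC by simp
qed

lemma wc_affine: "\<exists>c. \<forall>x. word_comp a b w n x = (\<Prod>t<n. a (w t)) * x + c"
proof (induction n)
  case 0 then show ?case by simp
next
  case (Suc n)
  then obtain c where c: "\<forall>x. word_comp a b w n x = (\<Prod>t<n. a (w t)) * x + c" by blast
  show ?case
    by (rule exI[of _ "(\<Prod>t<n. a (w t)) * b (w n) + c"]) (simp add: c aff_def algebra_simps)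
qed

lemma wc_split: "word_comp a b w (n + j) = word_comp a b w n \<circ> word_comp a b (\<lambda>t. w (n+t)) j"
  by (induction j) (simp_all add: comp_assoc)

lemma wc_maps:
  assumes "\<forall>i\<in>{1..m}. aff a b i ` K \<subseteq> K" "\<forall>n. w n \<in> {1..m}"
  shows "word_comp a b w n ` K \<subseteq> K"
proof (induction n)
  case 0 then show ?case by simp
next
  case (Suc n)
  have "word_comp a b w (Suc n) ` K = word_comp a b w n ` (aff a b (w n) ` K)"
    by (simp add: image_comp)
  also have "\<dots> \<subseteq> word_comp a b w n ` K" using assms by (intro image_mono) blast
  finally show ?case using Suc by blast
qed

lemma wc_nested:
  assumes "\<forall>i\<in>{1..m}. aff a b i ` K \<subseteq> K" "\<forall>n. w n \<in> {1..m}" "n \<le> n'"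
  shows "word_comp a b w n' ` K \<subseteq> word_comp a b w n ` K"
proof -
  have "word_comp a b w (Suc j) ` K \<subseteq> word_comp a b w j ` K" for j
  proof -
    have "word_comp a b w (Suc j) ` K = word_comp a b w j ` (aff a b (w j) ` K)"
      by (simp add: image_comp)
    also have "\<dots> \<subseteq> word_comp a b w j ` K" using assms by (intro image_mono) blast
    finally show ?thesis .
  qed
  then show ?thesis using lift_Suc_antimono_le[of "\<lambda>j. word_comp a b w j ` K"] assms(3) by blast
qed

lemma affine_comb:
  fixes P d x y :: complex and u v :: real
  assumes "u + v = 1"
  shows "P * (u *\<^sub>R x + v *\<^sub>R y) + d = u *\<^sub>R (P * x + d) + v *\<^sub>R (P * y + d)"
proof -
  have "d = u *\<^sub>R d + v *\<^sub>R d" using assms by (simp add: scaleR_add_left[symmetric])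
  then show ?thesis by (simp add: algebra_simps scaleR_conv_of_real)
qed

lemma aff_hull:
  fixes P d :: complex and K :: "complex set"
  assumes "\<forall>x. F x = P * x + d" "F ` K \<subseteq> K"
  shows "F ` (convex hull K) \<subseteq> convex hull K"
proof -
  have cv: "convex {x. F x \<in> convex hull K}"
  proof (rule convexI)
    fix x y :: complex and u v :: real
    assume xy: "x \<in> {x. F x \<in> convex hull K}" "y \<in> {x. F x \<in> convex hull K}"
      and uv: "0 \<le> u" "0 \<le> v" "u + v = 1"
    have "F (u *\<^sub>R x + v *\<^sub>R y) = u *\<^sub>R F x + v *\<^sub>R F y"
      using assms(1) affine_comb[OF uv(3)] by simp
    also have "\<dots> \<in> convex hull K" using xy uv by (intro convexD) auto
    finally show "u *\<^sub>R x + v *\<^sub>R y \<in> {x. F x \<in> convex hull K}" by simp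
  qed
  have "K \<subseteq> {x. F x \<in> convex hull K}" using assms(2) hull_subset by fastforce
  then have "convex hull K \<subseteq> {x. F x \<in> convex hull K}" using cv by (intro hull_minimal) auto
  then show ?thesis by blast
qed

lemma prod_lt1:
  fixes f :: "nat \<Rightarrow> real"
  assumes "\<forall>t<k. 0 < f t \<and> f t < 1" "k \<ge> 1"
  shows "(\<Prod>t<k. f t) < 1"
proof -
  obtain j where k: "k = Suc j" using assms(2) by (cases k) auto
  have ft: "0 \<le> f t \<and> f t \<le> 1" if "t < j" for t
  proof -
    have "t < k" using that k by simp
    then have "0 < f t \<and> f t < 1" using assms(1) by blast
    then show ?thesis by simp
  qed
  have "(\<Prod>t<j. f t) \<le> 1" using ft by (intro prod_le_1) auto
  moreover have "(\<Prod>t<j. f t) \<ge> 0" using ft by (intro prod_nonneg) auto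
  ultimately have "(\<Prod>t<j. f t) * f j \<le> 1 * f j" using assms k by (intro mult_right_mono) auto
  also have "\<dots> < 1" using assms k by auto
  finally show ?thesis using k by simp
qed

theorem theorem1p1:
  fixes m :: nat and a b :: "nat \<Rightarrow> complex" and K :: "complex set"
    and w :: "nat \<Rightarrow> nat" and l k :: nat and z :: complex
  assumes "m \<ge> 1"
    and "\<forall>i\<in>{1..m}. 0 < norm (a i) \<and> norm (a i) < 1"
    and "is_attractor m a b K"
    and "\<not> (\<exists>x. K = {x})"
    and "\<forall>n. w n \<in> {1..m}"
    and "k \<ge> 1"
    and "\<forall>n\<ge>l. w (n + k) = w n"
    and "is_coding a b K w z"
    and "z extreme_point_of (convex hull K)"
  shows "\<exists>r::real. r > 0 \<and> (\<Prod>t<k. a (w (l + t))) = complex_of_real r"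
proof -
  note am = assms(2) and wm = assms(5) and per = assms(7)
  have Kne: "K \<noteq> {}" and Kc: "compact K" and Keq: "K = (\<Union>i\<in>{1..m}. aff a b i ` K)"
    using assms(3) unfolding is_attractor_def by auto
  have affK: "\<forall>i\<in>{1..m}. aff a b i ` K \<subseteq> K" using Keq by blast
  define C where "C = convex hull K"
  have cvC: "convex C" unfolding C_def by simp
  have KC: "K \<subseteq> C" unfolding C_def by (rule hull_subset)
  define G where "G = word_comp a b w"
  define v where "v = (\<lambda>t. w (l + t))"
  have vm: "\<forall>n. v n \<in> {1..m}" using wm v_def by simp
  define H where "H = word_comp a b v k"
  define A where "A = (\<Prod>t<k. a (w (l + t)))"
  obtain c where Hc: "\<forall>x. H x = A * x + c"
    using wc_affine[of a b v k] unfolding H_def A_def v_def by blast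
  have HK: "H ` K \<subseteq> K" unfolding H_def using wc_maps[OF affK vm] .
  have nA: "norm A = (\<Prod>t<k. norm (a (w (l + t))))" unfolding A_def by (simp add: prod_norm)
  have "(\<Prod>t<k. norm (a (w (l + t)))) < 1"
    using am wm assms(6) by (intro prod_lt1) auto
  then have A1: "norm A < 1" using nA by simp
  have "(\<Prod>t<k. norm (a (w (l + t)))) > 0"
    using am wm by (intro prod_pos) auto
  then have "norm A > 0" using nA by simp
  then have A0: "A \<noteq> 0" by (metis norm_zero order_less_irrefl)
  have Ane1: "A \<noteq> 1" using A1 by auto
  have pj: "(\<lambda>t. w (l + j*k + t)) = v" for j
  proof (induction j)
    case 0 then show ?case by (simp add: v_def)
  next
    case (Suc j)
    have "w (l + Suc j * k + t) = w (l + j*k + t)" for t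
      using per[rule_format, of "l + j*k + t"] by (simp add: algebra_simps)
    then show ?case using Suc by (simp add: fun_eq_iff)
  qed
  have Gj: "G (l + j*k) = G l \<circ> (H ^^ j)" for j
  proof (induction j)
    case 0 then show ?case by simp
  next
    case (Suc j)
    have "G (l + Suc j * k) = G ((l + j*k) + k)" by (simp add: algebra_simps)
    also have "\<dots> = G (l + j*k) \<circ> word_comp a b (\<lambda>t. w (l + j*k + t)) k"
      unfolding G_def by (rule wc_split)
    also have "\<dots> = G l \<circ> (H ^^ j) \<circ> H" using Suc pj H_def by (simp only:)
    finally show ?case by (metis comp_assoc funpow_Suc_right)
  qed
  define ps where "ps = c / (1 - A)"
  have Hps: "H y = ps + A * (y - ps)" for y
  proof -
    have "1 - A \<noteq> 0" using Ane1 by simp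
    then have "ps * (1 - A) = c" unfolding ps_def by simp
    then show ?thesis using Hc by (simp add: algebra_simps)
  qed
  have Hj: "(H ^^ j) y = ps + A^j * (y - ps)" for j y
  proof (induction j)
    case 0 then show ?case by simp
  next
    case (Suc j)
    have "(H ^^ Suc j) y = H ((H ^^ j) y)" by simp
    also have "\<dots> = ps + A * ((H ^^ j) y - ps)" by (rule Hps)
    also have "\<dots> = ps + A^Suc j * (y - ps)" using Suc by simp
    finally show ?case .
  qed
  obtain x0 where x0: "x0 \<in> K" using Kne by blast
  have HjK: "(H ^^ j) x0 \<in> K" for j
  proof (induction j)
    case 0 then show ?case using x0 by simp
  next
    case (Suc j) then show ?case using HK by auto
  qed
  have "(\<lambda>j. ps + A^j * (x0 - ps)) \<longlonglongrightarrow> ps + 0 * (x0 - ps)"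
    by (intro tendsto_intros LIMSEQ_power_zero A1)
  then have "(\<lambda>j. (H ^^ j) x0) \<longlonglongrightarrow> ps" using Hj by simp
  then have psK: "ps \<in> K"
    using closed_sequentially[OF compact_imp_closed[OF Kc], of "\<lambda>j. (H ^^ j) x0" ps] HjK by blast
  have "G l ps \<in> (\<Inter>n\<in>{1..}. word_comp a b w n ` K)"
  proof
    fix n :: nat assume "n \<in> {1..}"
    have "n \<le> l + n*k" using assms(6) by (simp add: trans_le_add2)
    then have sub: "G (l + n*k) ` K \<subseteq> G n ` K"
      unfolding G_def using wc_nested[OF affK wm] by blast
    have "(H ^^ n) ps = ps" using Hj by simp
    then have "G l ps = G (l + n*k) ps" using Gj by simp
    then have "G l ps \<in> G (l + n*k) ` K" using psK by simp
    then show "G l ps \<in> word_comp a b w n ` K" using sub G_def by blast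
  qed
  then have Gz: "G l ps = z" using assms(8) unfolding is_coding_def by blast
  define P where "P = (\<Prod>t<l. a (w t))"
  obtain d where Gd: "\<forall>x. G l x = P * x + d" using wc_affine[of a b w l] unfolding G_def P_def by blast
  have "norm P = (\<Prod>t<l. norm (a (w t)))" unfolding P_def by (simp add: prod_norm)
  moreover have "(\<Prod>t<l. norm (a (w t))) > 0" using am wm by (intro prod_pos) auto
  ultimately have "norm P > 0" by simp
  then have P0: "P \<noteq> 0" by (metis norm_zero order_less_irrefl)
  have GKK: "G l ` K \<subseteq> K" unfolding G_def using wc_maps[OF affK wm] .
  have GC: "G l ` C \<subseteq> C" unfolding C_def using aff_hull[OF Gd GKK] .
  have HC: "H ` C \<subseteq> C" unfolding C_def using aff_hull[OF Hc HK] .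
  have zC: "convex (C - {z})" using assms(9) extreme_point_of_stillconvex[OF cvC] C_def by blast
  have psC: "convex (C - {ps})"
  proof (rule convexI)
    fix x y :: complex and u v :: real
    assume xy: "x \<in> C - {ps}" "y \<in> C - {ps}" and uv: "0 \<le> u" "0 \<le> v" "u + v = 1"
    have qC: "u *\<^sub>R x + v *\<^sub>R y \<in> C" using xy uv cvC by (intro convexD) auto
    have Gx: "G l x \<in> C - {z}"
    proof -
      have "G l x \<noteq> G l ps" using xy P0 Gd by simp
      then show ?thesis using xy GC Gz by auto
    qed
    have Gy: "G l y \<in> C - {z}"
    proof -
      have "G l y \<noteq> G l ps" using xy P0 Gd by simp
      then show ?thesis using xy GC Gz by auto
    qed
    have "G l (u *\<^sub>R x + v *\<^sub>R y) = u *\<^sub>R G l x + v *\<^sub>R G l y"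
      using Gd affine_comb[OF uv(3)] by simp
    also have "\<dots> \<in> C - {z}" using Gx Gy uv zC by (intro convexD) auto
    finally have "u *\<^sub>R x + v *\<^sub>R y \<noteq> ps" using Gz by auto
    then show "u *\<^sub>R x + v *\<^sub>R y \<in> C - {ps}" using qC by simp
  qed
  obtain x1 where x1: "x1 \<in> K" "x1 \<noteq> ps" using Kne assms(4) psK by blast
  have inv: "\<forall>y\<in>C. ps + A * (y - ps) \<in> C" using HC Hps by (metis image_subset_iff)
  show ?thesis using geom[OF psC _ x1(2) inv A0] x1(1) KC unfolding A_def by blast
qed

end
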